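(* Let $G$ be a weighted finite graph, $F:V\to\mathbb{R}^k$ a map, $S\subseteq V$, and $0<\epsilon<2$. Define $\theta:V\to\mathbb{R}$ by $\theta(v)=0$ if $F(v)=0$ and $\theta(v)=\max\{0,1-\overline{d}_F(v,S\cap\widetilde{V}_F)/\epsilon\}$ otherwise, and set $\Psi:=\theta\cdot F:V\to\mathbb{R}^k$. Then for every edge $\{u,v\}\in E$, \[ \|\Psi(u)+\Psi(v)\|\leq\left(1+\frac{2}{\epsilon}\right)\|F(u)+F(v)\|. \]
   Context: $G=(V,E,w)$ is a finite undirected graph without self-loops with positive symmetric edge weights. $\|\cdot\|$ is the Euclidean norm on $\mathbb{R}^k$. $\widetilde{V}_F:=\{v\in V:F(v)\neq0\}$ and for $u,v\in\widetilde{V}_F$, \[ \overline{d}_F(u,v):=\min\left\{\left\|\tfrac{F(u)}{\|F(u)\|}-\tfrac{F(v)}{\|F(v)\|}\right\|,\left\|\tfrac{F(u)}{\|F(u)\|}+\tfrac{F(v)}{\|F(v)\|}\right\|\right\}; \] for $T\subseteq\widetilde{V}_F$, $\overline{d}_F(v,T):=\inf_{t\in T}\overline{d}_F(v,t)$ (with the convention $\inf\emptyset=+\infty$). *)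

theory Defs
  imports "HOL-Analysis.Analysis"
begin

text \<open>Weighted finite undirected graph without self-loops, positive symmetric weights.
  Edges are stored as ordered pairs in a symmetric relation.\<close>
definition weighted_graph :: "'v set \<Rightarrow> ('v \<times> 'v) set \<Rightarrow> ('v \<Rightarrow> 'v \<Rightarrow> real) \<Rightarrow> bool" where
  "weighted_graph V E w \<longleftrightarrow> finite V \<and> E \<subseteq> V \<times> V
     \<and> (\<forall>u v. (u, v) \<in> E \<longrightarrow> (v, u) \<in> E)
     \<and> (\<forall>v. (v, v) \<notin> E)
     \<and> (\<forall>u v. (u, v) \<in> E \<longrightarrow> w u v > 0 \<and> w u v = w v u)"

definition Vtilde :: "'v set \<Rightarrow> ('v \<Rightarrow> real ^ 'k) \<Rightarrow> 'v set" where
  "Vtilde V F = {v \<in> V. F v \<noteq> 0}"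

definition dbar :: "('v \<Rightarrow> real ^ 'k) \<Rightarrow> 'v \<Rightarrow> 'v \<Rightarrow> real" where
  "dbar F u v = min (norm (F u /\<^sub>R norm (F u) - F v /\<^sub>R norm (F v)))
                    (norm (F u /\<^sub>R norm (F u) + F v /\<^sub>R norm (F v)))"

text \<open>Distance to a set, with inf of the empty set = +infinity (hence valued in ereal).\<close>
definition dbar_set :: "('v \<Rightarrow> real ^ 'k) \<Rightarrow> 'v \<Rightarrow> 'v set \<Rightarrow> ereal" where
  "dbar_set F v T = (INF t\<in>T. ereal (dbar F v t))"

definition theta :: "'v set \<Rightarrow> ('v \<Rightarrow> real ^ 'k) \<Rightarrow> 'v set \<Rightarrow> real \<Rightarrow> 'v \<Rightarrow> real" where
  "theta V F S eps v = (if F v = 0 then 0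
     else real_of_ereal (max 0 (1 - dbar_set F v (S \<inter> Vtilde V F) / ereal eps)))"

definition Psi :: "'v set \<Rightarrow> ('v \<Rightarrow> real ^ 'k) \<Rightarrow> 'v set \<Rightarrow> real \<Rightarrow> 'v \<Rightarrow> real ^ 'k" where
  "Psi V F S eps v = theta V F S eps v *\<^sub>R F v"

end

theory Submission
  imports Defs
begin

lemma mtri:
  fixes a b c :: "'a::real_normed_vector"
  shows "min (norm (a - c)) (norm (a + c)) \<le> min (norm (a - b)) (norm (a + b)) + min (norm (b - c)) (norm (b + c))"
proof -
  have 1: "norm (a - c) \<le> norm (a - b) + norm (b - c)" using norm_triangle_ineq[of "a - b" "b - c"] by simp
  have 2: "norm (a + c) \<le> norm (a - b) + norm (b + c)"
    using norm_triangle_ineq[of "a - b" "b + c"] by (simp add: algebra_simps)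
  have 3: "norm (a + c) \<le> norm (a + b) + norm (b - c)"
    using norm_triangle_ineq4[of "a + b" "b - c"] by (simp add: algebra_simps)
  have 4: "norm (a - c) \<le> norm (a + b) + norm (b + c)"
    using norm_triangle_ineq4[of "a + b" "b + c"] by (simp add: algebra_simps)
  show ?thesis using 1 2 3 4 by (simp add: min_def)
qed

lemma dbar_tri: "dbar F u t \<le> dbar F u v + dbar F v t"
  unfolding dbar_def by (rule mtri)

lemma dbar_sym: "dbar F u v = dbar F v u"
  unfolding dbar_def by (simp add: norm_minus_commute add.commute)

lemma dbar_nonneg: "0 \<le> dbar F u v"
  unfolding dbar_def by simp

lemma unit_sum:
  fixes x y :: "'a::real_normed_vector"
  assumes "x \<noteq> 0" "y \<noteq> 0"
  shows "norm (x /\<^sub>R norm x + y /\<^sub>R norm y) * norm x \<le> 2 * norm (x + y)"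
proof -
  have nx: "norm x > 0" "norm y > 0" using assms by auto
  have "norm (x /\<^sub>R norm x + y /\<^sub>R norm y) * norm x = norm (norm x *\<^sub>R (x /\<^sub>R norm x + y /\<^sub>R norm y))"
    using nx by simp
  also have "norm x *\<^sub>R (x /\<^sub>R norm x + y /\<^sub>R norm y) = (x + y) + (norm x / norm y - 1) *\<^sub>R y"
    using nx by (simp add: algebra_simps divide_inverse)
  also have "norm ((x + y) + (norm x / norm y - 1) *\<^sub>R y) \<le> norm (x + y) + norm ((norm x / norm y - 1) *\<^sub>R y)"
    by (rule norm_triangle_ineq)
  also have "norm ((norm x / norm y - 1) *\<^sub>R y) = \<bar>norm x - norm y\<bar>"
  proof -
    have e: "norm x / norm y - 1 = (norm x - norm y) / norm y" using nx by (simp add: field_simps)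
    show ?thesis unfolding e using nx by (simp add: abs_divide)
  qed
  also have "\<bar>norm x - norm y\<bar> \<le> norm (x + y)"
    using norm_triangle_ineq3[of x "-y"] by simp
  finally show ?thesis by simp
qed

lemma theta_empty:
  assumes "S \<inter> Vtilde V F = {}" "0 < eps"
  shows "theta V F S eps x = 0"
  using assms by (simp add: theta_def dbar_set_def top_ereal_def one_ereal_def max_def)

lemma theta_val:
  assumes "t0 \<in> S \<inter> Vtilde V F" "0 < eps" "F x \<noteq> 0"
  obtains r where "0 \<le> r" "dbar_set F x (S \<inter> Vtilde V F) = ereal r"
    "theta V F S eps x = max 0 (1 - r / eps)"
proof -
  let ?T = "S \<inter> Vtilde V F"
  have lo: "0 \<le> dbar_set F x ?T"
    unfolding dbar_set_def by (rule INF_greatest) (simp add: dbar_nonneg)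
  have hi: "dbar_set F x ?T \<le> ereal (dbar F x t0)"
    unfolding dbar_set_def using assms(1) by (rule INF_lower)
  obtain r where r: "dbar_set F x ?T = ereal r"
    using lo hi by (cases "dbar_set F x ?T") auto
  have "theta V F S eps x = real_of_ereal (max 0 (1 - ereal r / ereal eps))"
    using assms r by (simp add: theta_def)
  also have "1 - ereal r / ereal eps = ereal (1 - r / eps)"
    using assms(2) by (simp add: divide_ereal_def divide_inverse one_ereal_def)
  finally have th: "theta V F S eps x = real_of_ereal (max 0 (ereal (1 - r / eps)))" .
  have m: "real_of_ereal (max 0 (ereal z)) = max 0 z" for z
    by (cases "0 \<le> z") (auto simp: max_def)
  from th have "theta V F S eps x = max 0 (1 - r / eps)" using m[of "1 - r / eps"] by simp
  then show ?thesis using that r lo by simp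
qed

lemma theta_range: assumes "0 < eps" shows "0 \<le> theta V F S eps x \<and> theta V F S eps x \<le> 1"
proof (cases "S \<inter> Vtilde V F = {} \<or> F x = 0")
  case True
  then show ?thesis using theta_empty[of S V F eps x] assms by (auto simp: theta_def)
next
  case False
  then obtain t0 where t0: "t0 \<in> S \<inter> Vtilde V F" and fx: "F x \<noteq> 0" by blast
  obtain r where "0 \<le> r" "theta V F S eps x = max 0 (1 - r / eps)"
    using theta_val[OF t0 assms fx] by blast
  then show ?thesis using assms by (simp add: max_def)
qed

lemma theta_lip:
  assumes "0 < eps" "F u \<noteq> 0" "F v \<noteq> 0"
  shows "\<bar>theta V F S eps u - theta V F S eps v\<bar> \<le> dbar F u v / eps"
proof (cases "S \<inter> Vtilde V F = {}")
  case True
  then show ?thesis using assms theta_empty[OF True assms(1)] by (simp add: dbar_nonneg)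
next
  case False
  then obtain t0 where t0: "t0 \<in> S \<inter> Vtilde V F" by blast
  let ?T = "S \<inter> Vtilde V F"
  obtain ru where ru: "0 \<le> ru" "dbar_set F u ?T = ereal ru" "theta V F S eps u = max 0 (1 - ru / eps)"
    using theta_val[OF t0 assms(1,2)] by blast
  obtain rv where rv: "0 \<le> rv" "dbar_set F v ?T = ereal rv" "theta V F S eps v = max 0 (1 - rv / eps)"
    using theta_val[OF t0 assms(1,3)] by blast
  have tri: "ra - dbar F a b \<le> rb"
    if a: "dbar_set F a ?T = ereal ra" and b: "dbar_set F b ?T = ereal rb" for a b ra rb
  proof -
    have "ereal (ra - dbar F a b) \<le> dbar_set F b ?T"
      unfolding dbar_set_def
    proof (rule INF_greatest)
      fix t assume t: "t \<in> ?T"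
      have "ereal ra \<le> ereal (dbar F a t)" using a t unfolding dbar_set_def
        by (metis INF_lower)
      then have "ra \<le> dbar F a t" by simp
      then show "ereal (ra - dbar F a b) \<le> ereal (dbar F b t)"
        using dbar_tri[of F a t b] by simp
    qed
    then show ?thesis using b by simp
  qed
  have 1: "ru - dbar F u v \<le> rv" using tri[OF ru(2) rv(2)] .
  have 2: "rv - dbar F u v \<le> ru" using tri[OF rv(2) ru(2)] dbar_sym[of F u v] by simp
  have e: "(1 - ru / eps) - (1 - rv / eps) = (rv - ru) / eps"
    using assms(1) by (simp add: field_simps)
  have "\<bar>(1 - ru / eps) - (1 - rv / eps)\<bar> = \<bar>ru - rv\<bar> / eps"
    unfolding e using assms(1) by (simp add: abs_divide abs_minus_commute)
  also have "\<dots> \<le> dbar F u v / eps" using 1 2 assms(1) by (simp add: divide_right_mono)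
  finally have "\<bar>(1 - ru / eps) - (1 - rv / eps)\<bar> \<le> dbar F u v / eps" .
  moreover have "\<bar>max 0 a - max 0 b\<bar> \<le> \<bar>a - b\<bar>" for a b :: real by (simp add: max_def abs_if)
  ultimately show ?thesis unfolding ru(3) rv(3) by (meson order_trans)
qed


theorem lemma5p3:
  fixes V :: "'v set" and E :: "('v \<times> 'v) set" and w :: "'v \<Rightarrow> 'v \<Rightarrow> real"
    and F :: "'v \<Rightarrow> real ^ 'k" and S :: "'v set" and eps :: real
  assumes "weighted_graph V E w"
    and "S \<subseteq> V"
    and "0 < eps" and "eps < 2"
    and "(u, v) \<in> E"
  shows "norm (Psi V F S eps u + Psi V F S eps v) \<le> (1 + 2 / eps) * norm (F u + F v)"
proof -
  let ?tu = "theta V F S eps u" and ?tv = "theta V F S eps v"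
  have ru: "0 \<le> ?tu" "?tu \<le> 1" and rv: "0 \<le> ?tv" "?tv \<le> 1"
    using theta_range[OF assms(3), of V F S u] theta_range[OF assms(3), of V F S v] by auto
  have one: "1 \<le> 1 + 2 / eps" using assms(3) by simp
  have fac: "norm (F u + F v) \<le> (1 + 2 / eps) * norm (F u + F v)"
    using mult_right_mono[OF one norm_ge_zero[of "F u + F v"]] by simp
  have fac2: "(1 + 2 / eps) * norm (F u + F v) = norm (F u + F v) + (2 / eps) * norm (F u + F v)"
    by (simp add: algebra_simps)
  show ?thesis
  proof (cases "F u = 0 \<or> F v = 0")
    case True
    then show ?thesis
    proof
      assume z: "F u = 0"
      have "norm (Psi V F S eps u + Psi V F S eps v) = ?tv * norm (F v)"
        using z rv by (simp add: Psi_def)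
      also have "\<dots> \<le> norm (F u + F v)" using z rv by (simp add: mult_left_le_one_le)
      finally show ?thesis using fac by linarith
    next
      assume z: "F v = 0"
      have "norm (Psi V F S eps u + Psi V F S eps v) = ?tu * norm (F u)"
        using z ru by (simp add: Psi_def)
      also have "\<dots> \<le> norm (F u + F v)" using z ru by (simp add: mult_left_le_one_le)
      finally show ?thesis using fac by linarith
    qed
  next
    case False
    then have nu: "F u \<noteq> 0" and nv: "F v \<noteq> 0" by auto
    have eq: "Psi V F S eps u + Psi V F S eps v = ?tv *\<^sub>R (F u + F v) + (?tu - ?tv) *\<^sub>R F u"
      by (simp add: Psi_def algebra_simps)
    have "norm (Psi V F S eps u + Psi V F S eps v) \<le> norm (?tv *\<^sub>R (F u + F v)) + norm ((?tu - ?tv) *\<^sub>R F u)"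
      unfolding eq by (rule norm_triangle_ineq)
    also have "norm (?tv *\<^sub>R (F u + F v)) \<le> norm (F u + F v)"
      using rv by (simp add: mult_left_le_one_le)
    also have "norm ((?tu - ?tv) *\<^sub>R F u) = \<bar>?tu - ?tv\<bar> * norm (F u)" by simp
    also have "\<dots> \<le> (dbar F u v / eps) * norm (F u)"
      by (rule mult_right_mono[OF theta_lip[where F=F and u=u and v=v and V=V and S=S, OF assms(3) nu nv]]) simp
    also have "\<dots> \<le> (norm (F u /\<^sub>R norm (F u) + F v /\<^sub>R norm (F v)) / eps) * norm (F u)"
      by (rule mult_right_mono[OF divide_right_mono]) (auto simp: dbar_def less_imp_le[OF assms(3)])
    also have "\<dots> = (norm (F u /\<^sub>R norm (F u) + F v /\<^sub>R norm (F v)) * norm (F u)) / eps" by simp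
    also have "\<dots> \<le> (2 * norm (F u + F v)) / eps"
      by (rule divide_right_mono[OF unit_sum[OF nu nv]]) (use assms(3) in simp)
    finally show ?thesis unfolding fac2 by simp
  qed
qed

end
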